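(* Let $m>0$, $\gamma>0$, $\alpha,\beta>0$, $c_k=k^{-(1+\alpha\beta)}$, $\lambda_k=k^{-\beta}$ for $k\geq1$, and let $s$ satisfy $0\leq 2s<\alpha\beta$. Then the linear map $L$ defined on $\mathcal{H}_{-s}$ by $$L(x,v,z_1,z_2,\dots)=\Big(v,\ -\tfrac{\gamma}{m}v-\tfrac1m\sum_{k\geq1}\sqrt{c_k}\,z_k,\ -\lambda_1z_1+\sqrt{c_1}\,v,\ -\lambda_2z_2+\sqrt{c_2}\,v,\ \dots\Big)$$ is a bounded linear operator from $\mathcal{H}_{-s}$ to $\mathcal{H}_{-s}$.
   Context: $\mathcal{H}_{-s}$ is the Hilbert space of real sequences $X=(x,v,z_1,z_2,\dots)$ with norm $\|X\|_{-s}^2=x^2+v^2+\sum_{k\geq1}k^{-2s}z_k^2<\infty$. *)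

theory Defs
  imports "HOL-Analysis.Analysis"
begin

text \<open>Elements of H_{-s} are triples (x, v, z) where z k stands for the
  paper's z_{k+1} (k = 0, 1, 2, ...), i.e. the paper's index k >= 1 is shifted by one.\<close>

type_synonym hseq = "real \<times> real \<times> (nat \<Rightarrow> real)"

definition wt :: "real \<Rightarrow> nat \<Rightarrow> real" where
  "wt s k = real (Suc k) powr (-2 * s)"

definition Hs :: "real \<Rightarrow> hseq set" where
  "Hs s = {(x, v, z). summable (\<lambda>k. wt s k * (z k)^2)}"

definition Hnorm :: "real \<Rightarrow> hseq \<Rightarrow> real" where
  "Hnorm s X = (case X of (x, v, z) \<Rightarrow> sqrt (x^2 + v^2 + (\<Sum>k. wt s k * (z k)^2)))"

definition hadd :: "hseq \<Rightarrow> hseq \<Rightarrow> hseq" where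
  "hadd X Y = (case X of (x, v, z) \<Rightarrow> case Y of (x', v', z') \<Rightarrow>
      (x + x', v + v', \<lambda>k. z k + z' k))"

definition hscale :: "real \<Rightarrow> hseq \<Rightarrow> hseq" where
  "hscale a X = (case X of (x, v, z) \<Rightarrow> (a * x, a * v, \<lambda>k. a * z k))"

definition ccoef :: "real \<Rightarrow> real \<Rightarrow> nat \<Rightarrow> real" where
  "ccoef \<alpha> \<beta> k = real (Suc k) powr (-(1 + \<alpha> * \<beta>))"

definition lam :: "real \<Rightarrow> nat \<Rightarrow> real" where
  "lam \<beta> k = real (Suc k) powr (-\<beta>)"

definition Lop :: "real \<Rightarrow> real \<Rightarrow> real \<Rightarrow> real \<Rightarrow> hseq \<Rightarrow> hseq" where
  "Lop m \<gamma> \<alpha> \<beta> X = (case X of (x, v, z) \<Rightarrow>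
     (v,
      - (\<gamma> / m) * v - (1 / m) * (\<Sum>k. sqrt (ccoef \<alpha> \<beta> k) * z k),
      \<lambda>k. - lam \<beta> k * z k + sqrt (ccoef \<alpha> \<beta> k) * v))"

end

theory Submission imports Defs begin
lemma two_prod_le: "2 * (a * b) \<le> a^2 + (b::real)^2"
proof -
  have "0 \<le> (a - b)^2" by simp
  thus ?thesis by (simp add: power2_eq_square algebra_simps)
qed

lemma summ_pow: "p < -1 \<Longrightarrow> summable (\<lambda>k. real (Suc k) powr p)"
  using summable_Suc_iff[where f="\<lambda>n. real n powr p"] summable_real_powr_iff[of p] by simp

lemma amgm: assumes "c \<ge> 0" "w > 0" shows "2 * sqrt c * \<bar>z\<bar> \<le> c / w + w * z^2"
proof -
  have e: "sqrt c * \<bar>z\<bar> = sqrt (c/w) * (sqrt w * \<bar>z\<bar>)" using assms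
    by (simp add: real_sqrt_divide)
  have i: "2 * (sqrt (c/w) * (sqrt w * \<bar>z\<bar>)) \<le> (sqrt (c/w))^2 + (sqrt w * \<bar>z\<bar>)^2"
    by (rule two_prod_le)
  have e2: "(sqrt (c/w))^2 = c/w" using assms by simp
  have e3: "(sqrt w * \<bar>z\<bar>)^2 = w * z^2" using assms by (simp add: power_mult_distrib)
  have "2 * (sqrt c * \<bar>z\<bar>) \<le> c / w + w * z^2" using i unfolding e[symmetric] e2 e3 .
  thus ?thesis by (simp add: mult.assoc)
qed

lemma wt_pos: "wt s k > 0" by (simp add: wt_def)
lemma wt_le1: "s \<ge> 0 \<Longrightarrow> wt s k \<le> 1" unfolding wt_def
  using powr_mono[of "-2 * s" 0 "real (Suc k)"] by simp
lemma c_pos: "ccoef a b k > 0" by (simp add: ccoef_def)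
lemma lam_bd: "b > 0 \<Longrightarrow> 0 \<le> lam b k \<and> lam b k \<le> 1" unfolding lam_def
  using powr_mono[of "-b" 0 "real (Suc k)"] by simp
lemma cw: "ccoef a b k / wt s k = real (Suc k) powr (2 * s - 1 - a*b)"
proof -
  have "real (Suc k) powr (-(1 + a*b)) / real (Suc k) powr (-2 * s) = real (Suc k) powr (-(1 + a*b) - (-2 * s))"
    by (rule powr_diff[symmetric])
  moreover have "-(1 + a*b) - (-2 * s) = 2 * s - 1 - a*b" by simp
  ultimately show ?thesis unfolding ccoef_def wt_def by metis
qed
lemma c_summ: "a*b > 0 \<Longrightarrow> summable (ccoef a b)"
  unfolding ccoef_def by (rule summ_pow) simp
lemma cw_summ: "2 * s < a*b \<Longrightarrow> summable (\<lambda>k. ccoef a b k / wt s k)"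
  unfolding cw by (rule summ_pow) simp

lemma pt_bound: assumes "t > 0"
  shows "norm (sqrt (ccoef a b k) * z k) \<le> (t * (ccoef a b k / wt s k) + wt s k * (z k)^2 / t) / 2"
proof -
  have w: "wt s k / t > 0" using wt_pos assms by simp
  have i: "2 * sqrt (ccoef a b k) * \<bar>z k\<bar> \<le> ccoef a b k / (wt s k / t) + (wt s k / t) * (z k)^2"
    by (rule amgm[OF less_imp_le[OF c_pos] w])
  have e1: "ccoef a b k / (wt s k / t) = t * (ccoef a b k / wt s k)" using assms by simp
  have e2: "norm (sqrt (ccoef a b k) * z k) = sqrt (ccoef a b k) * \<bar>z k\<bar>"
    using c_pos[of a b k] by (simp add: abs_mult)
  have e3: "wt s k / t * (z k)^2 = wt s k * (z k)^2 / t" by simp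
  have e4: "2 * sqrt (ccoef a b k) * \<bar>z k\<bar> = 2 * (sqrt (ccoef a b k) * \<bar>z k\<bar>)" by simp
  have H: "2 * (sqrt (ccoef a b k) * \<bar>z k\<bar>) \<le> t * (ccoef a b k / wt s k) + wt s k * (z k)^2 / t"
    using i unfolding e1 e3 e4 .
  have gen: "\<And>X Y::real. 2*X \<le> Y \<Longrightarrow> X \<le> Y/2" by simp
  show ?thesis unfolding e2 by (rule gen[OF H])
qed

lemma summ1: assumes "2 * s < a*b" "summable (\<lambda>k. wt s k * (z k)^2)"
  shows "summable (\<lambda>k. sqrt (ccoef a b k) * z k)"
proof (rule summable_comparison_test')
  show "summable (\<lambda>k. (1 * (ccoef a b k / wt s k) + wt s k * (z k)^2 / 1) / 2)"
    using cw_summ[OF assms(1)] assms(2) by (intro summable_divide summable_add) auto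
  show "norm (sqrt (ccoef a b k) * z k) \<le> (1 * (ccoef a b k / wt s k) + wt s k * (z k)^2 / 1) / 2" for k
    by (rule pt_bound) simp
qed

lemma Sbound: assumes "2 * s < a*b" "summable (\<lambda>k. wt s k * (z k)^2)" "t > 0"
  shows "\<bar>\<Sum>k. sqrt (ccoef a b k) * z k\<bar> \<le> (t * (\<Sum>k. ccoef a b k / wt s k) + (\<Sum>k. wt s k * (z k)^2) / t) / 2"
proof -
  have s1: "summable (\<lambda>k. t * (ccoef a b k / wt s k))" using cw_summ[OF assms(1)] by (rule summable_mult)
  have s2: "summable (\<lambda>k. wt s k * (z k)^2 / t)" using assms(2) by (rule summable_divide)
  have "norm (\<Sum>k. sqrt (ccoef a b k) * z k) \<le> (\<Sum>k. (t * (ccoef a b k / wt s k) + wt s k * (z k)^2 / t) / 2)"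
    by (rule norm_suminf_le[OF pt_bound[OF assms(3)]]) (intro summable_divide summable_add s1 s2)
  also have "\<dots> = (t * (\<Sum>k. ccoef a b k / wt s k) + (\<Sum>k. wt s k * (z k)^2) / t) / 2"
    using suminf_divide[OF summable_add[OF s1 s2], of 2] suminf_add[OF s1 s2]
      suminf_mult[OF cw_summ[OF assms(1)], of t] suminf_divide[OF assms(2), of t] by simp
  finally show ?thesis by simp
qed

lemma Sbound2: assumes "2 * s < a*b" "summable (\<lambda>k. wt s k * (z k)^2)" "N \<ge> 0"
  "(\<Sum>k. wt s k * (z k)^2) \<le> N^2"
  shows "\<bar>\<Sum>k. sqrt (ccoef a b k) * z k\<bar> \<le> ((\<Sum>k. ccoef a b k / wt s k) + 1) / 2 * N"
proof (cases "N = 0")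
  case True
  have nn: "\<And>k. 0 \<le> wt s k * (z k)^2" by (intro mult_nonneg_nonneg less_imp_le[OF wt_pos] zero_le_power2)
  have "(\<Sum>k. wt s k * (z k)^2) = 0" using True assms(4) suminf_nonneg[OF assms(2) nn] by simp
  hence "\<forall>k. wt s k * (z k)^2 = 0" using suminf_eq_zero_iff[OF assms(2) nn] by simp
  hence "\<forall>k. z k = 0" using wt_pos by (metis less_irrefl mult_eq_0_iff power_eq_0_iff)
  thus ?thesis using True by simp
next
  case False
  hence Np: "N > 0" using assms(3) by simp
  have "\<bar>\<Sum>k. sqrt (ccoef a b k) * z k\<bar> \<le> (N * (\<Sum>k. ccoef a b k / wt s k) + (\<Sum>k. wt s k * (z k)^2) / N) / 2"
    by (rule Sbound[OF assms(1,2) Np])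
  also have "(\<Sum>k. wt s k * (z k)^2) / N \<le> N" using assms(4) Np
    by (simp add: divide_le_eq power2_eq_square)
  finally show ?thesis by (simp add: algebra_simps)
qed

lemma sq2: "(p + q)^2 \<le> 2 * p^2 + 2 * (q::real)^2"
proof -
  have "0 \<le> (p - q)^2" by simp
  thus ?thesis by (simp add: power2_eq_square algebra_simps)
qed

lemma pt2: assumes "s \<ge> 0" "b > 0"
  shows "wt s k * (- lam b k * z k + sqrt (ccoef a' b k) * v)^2 \<le> 2 * (wt s k * (z k)^2) + 2 * v^2 * ccoef a' b k"
proof -
  have w: "0 < wt s k" "wt s k \<le> 1" using wt_pos wt_le1 assms by auto
  have l: "(lam b k)^2 \<le> 1" using lam_bd[OF assms(2)] by (simp add: power_le_one)
  have c: "(sqrt (ccoef a' b k))^2 = ccoef a' b k" using c_pos[of a' b k] by simp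
  have "(- lam b k * z k + sqrt (ccoef a' b k) * v)^2 \<le> 2 * (- lam b k * z k)^2 + 2 * (sqrt (ccoef a' b k) * v)^2"
    by (rule sq2)
  also have "\<dots> = 2 * (lam b k)^2 * (z k)^2 + 2 * ccoef a' b k * v^2"
    using c by (simp add: power_mult_distrib)
  also have "\<dots> \<le> 2 * (z k)^2 + 2 * ccoef a' b k * v^2"
    using l mult_right_mono[OF l, of "(z k)^2"] by simp
  finally have "wt s k * (- lam b k * z k + sqrt (ccoef a' b k) * v)^2 \<le> wt s k * (2 * (z k)^2 + 2 * ccoef a' b k * v^2)"
    using w by (simp add: mult_left_mono)
  also have "\<dots> \<le> 2 * (wt s k * (z k)^2) + 2 * v^2 * ccoef a' b k"
    using w c_pos[of a' b k] mult_right_mono[OF w(2), of "2 * ccoef a' b k * v^2"]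
    by (simp add: algebra_simps)
  finally show ?thesis .
qed

lemma linS: fixes h f g :: "nat \<Rightarrow> real"
  assumes "summable (\<lambda>k. h k * f k)" "summable (\<lambda>k. h k * g k)"
  shows "(\<Sum>k. h k * (a * f k + b * g k)) = a * (\<Sum>k. h k * f k) + b * (\<Sum>k. h k * g k)"
proof -
  have sf: "summable (\<lambda>k. a * (h k * f k))" using assms by (simp add: summable_mult)
  have sg: "summable (\<lambda>k. b * (h k * g k))" using assms by (simp add: summable_mult)
  have "(\<Sum>k. h k * (a * f k + b * g k)) = (\<Sum>k. a * (h k * f k) + b * (h k * g k))"
    by (simp add: algebra_simps)
  also have "\<dots> = (\<Sum>k. a * (h k * f k)) + (\<Sum>k. b * (h k * g k))"
    using suminf_add[OF sf sg] by simp
  also have "\<dots> = a * (\<Sum>k. h k * f k) + b * (\<Sum>k. h k * g k)"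
    using assms by (simp add: suminf_mult)
  finally show ?thesis .
qed

theorem proposition3p1:
  fixes m \<gamma> \<alpha> \<beta> s :: real
  assumes "m > 0" "\<gamma> > 0" "\<alpha> > 0" "\<beta> > 0"
    and "0 \<le> 2 * s" "2 * s < \<alpha> * \<beta>"
  shows "(\<forall>x v z. (x, v, z) \<in> Hs s \<longrightarrow>
            summable (\<lambda>k. sqrt (ccoef \<alpha> \<beta> k) * z k))
       \<and> (\<forall>X \<in> Hs s. Lop m \<gamma> \<alpha> \<beta> X \<in> Hs s)
       \<and> (\<forall>X \<in> Hs s. \<forall>Y \<in> Hs s. \<forall>a b.
            Lop m \<gamma> \<alpha> \<beta> (hadd (hscale a X) (hscale b Y))
              = hadd (hscale a (Lop m \<gamma> \<alpha> \<beta> X)) (hscale b (Lop m \<gamma> \<alpha> \<beta> Y)))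
       \<and> (\<exists>C \<ge> 0. \<forall>X \<in> Hs s. Hnorm s (Lop m \<gamma> \<alpha> \<beta> X) \<le> C * Hnorm s X)"
proof -
  have s0: "s \<ge> 0" using assms by simp
  have ab: "\<alpha> * \<beta> > 0" using assms by simp
  have P1: "\<forall>x v z. (x, v, z) \<in> Hs s \<longrightarrow> summable (\<lambda>k. sqrt (ccoef \<alpha> \<beta> k) * z k)"
    using summ1[OF assms(6)] by (auto simp: Hs_def)
  have sumL: "summable (\<lambda>k. wt s k * (- lam \<beta> k * z k + sqrt (ccoef \<alpha> \<beta> k) * v)^2)"
    if "summable (\<lambda>k. wt s k * (z k)^2)" for z v
  proof (rule summable_comparison_test')
    show "summable (\<lambda>k. 2 * (wt s k * (z k)^2) + 2 * v^2 * ccoef \<alpha> \<beta> k)"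
      using that c_summ[OF ab] by (intro summable_add summable_mult) auto
    show "norm (wt s k * (- lam \<beta> k * z k + sqrt (ccoef \<alpha> \<beta> k) * v)^2)
      \<le> 2 * (wt s k * (z k)^2) + 2 * v^2 * ccoef \<alpha> \<beta> k" for k
      using pt2[OF s0 assms(4), of k z \<alpha> v] wt_pos[of s k] by simp
  qed
  have P2: "\<forall>X \<in> Hs s. Lop m \<gamma> \<alpha> \<beta> X \<in> Hs s"
    using sumL by (auto simp: Hs_def Lop_def)
  have P3: "\<forall>X \<in> Hs s. \<forall>Y \<in> Hs s. \<forall>a b.
            Lop m \<gamma> \<alpha> \<beta> (hadd (hscale a X) (hscale b Y))
              = hadd (hscale a (Lop m \<gamma> \<alpha> \<beta> X)) (hscale b (Lop m \<gamma> \<alpha> \<beta> Y))"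
  proof (intro ballI allI)
    fix X Y a b assume X: "X \<in> Hs s" and Y: "Y \<in> Hs s"
    obtain x v z where Xe: "X = (x, v, z)" by (cases X) auto
    obtain x' v' z' where Ye: "Y = (x', v', z')" by (cases Y) auto
    have sz: "summable (\<lambda>k. sqrt (ccoef \<alpha> \<beta> k) * z k)" using P1 X Xe by auto
    have sz': "summable (\<lambda>k. sqrt (ccoef \<alpha> \<beta> k) * z' k)" using P1 Y Ye by auto
    have L: "(\<Sum>k. sqrt (ccoef \<alpha> \<beta> k) * (a * z k + b * z' k)) =
       a * (\<Sum>k. sqrt (ccoef \<alpha> \<beta> k) * z k) + b * (\<Sum>k. sqrt (ccoef \<alpha> \<beta> k) * z' k)"
      by (rule linS[OF sz sz'])
    show "Lop m \<gamma> \<alpha> \<beta> (hadd (hscale a X) (hscale b Y))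
              = hadd (hscale a (Lop m \<gamma> \<alpha> \<beta> X)) (hscale b (Lop m \<gamma> \<alpha> \<beta> Y))"
      unfolding Xe Ye by (simp add: Lop_def hadd_def hscale_def L, simp add: algebra_simps add_divide_distrib)
  qed
  define A where "A = (\<Sum>k. ccoef \<alpha> \<beta> k / wt s k)"
  define D where "D = (\<Sum>k. ccoef \<alpha> \<beta> k)"
  define K where "K = (A + 1) / 2"
  define C2 where "C2 = 3 + 2 * (\<gamma>/m)^2 + 2 * K^2 / m^2 + 2 * D"
  have D0: "D \<ge> 0" unfolding D_def using c_summ[OF ab] c_pos
    by (intro suminf_nonneg) (auto intro: less_imp_le)
  have C20: "C2 \<ge> 0" unfolding C2_def using D0 by (simp add: add_nonneg_nonneg)
  have P4: "\<forall>X \<in> Hs s. Hnorm s (Lop m \<gamma> \<alpha> \<beta> X) \<le> sqrt C2 * Hnorm s X"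
  proof
    fix X assume X: "X \<in> Hs s"
    obtain x v z where Xe: "X = (x, v, z)" by (cases X) auto
    have sb: "summable (\<lambda>k. wt s k * (z k)^2)" using X Xe by (simp add: Hs_def)
    define B where "B = (\<Sum>k. wt s k * (z k)^2)"
    define S where "S = (\<Sum>k. sqrt (ccoef \<alpha> \<beta> k) * z k)"
    define N where "N = sqrt (x^2 + v^2 + B)"
    have B0: "B \<ge> 0" unfolding B_def using sb
      by (intro suminf_nonneg) (auto intro: mult_nonneg_nonneg less_imp_le[OF wt_pos])
    have Q0: "0 \<le> x^2 + v^2 + B" by (intro add_nonneg_nonneg zero_le_power2 B0)
    have N2: "N^2 = x^2 + v^2 + B" unfolding N_def by (rule real_sqrt_pow2[OF Q0])
    have N0: "N \<ge> 0" unfolding N_def by (rule real_sqrt_ge_zero[OF Q0])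
    have HX: "Hnorm s X = N" unfolding Xe Hnorm_def N_def B_def by simp
    have BN: "B \<le> N^2" and vN: "v^2 \<le> N^2" using N2 B0 by auto
    have SK: "\<bar>S\<bar> \<le> K * N" unfolding S_def K_def A_def
      by (rule Sbound2[OF assms(6) sb N0]) (use BN B_def in simp)
    have S2: "S^2 \<le> K^2 * N^2"
    proof -
      have "S^2 = \<bar>S\<bar>^2" by simp
      also have "\<dots> \<le> (K * N)^2" using SK by (intro power_mono) auto
      finally show ?thesis by (simp add: power_mult_distrib)
    qed
    define T where "T = (\<Sum>k. wt s k * (- lam \<beta> k * z k + sqrt (ccoef \<alpha> \<beta> k) * v)^2)"
    have T: "T \<le> 2 * B + 2 * v^2 * D"
    proof -
      have s1: "summable (\<lambda>k. 2 * (wt s k * (z k)^2) + 2 * v^2 * ccoef \<alpha> \<beta> k)"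
        using sb c_summ[OF ab] by (intro summable_add summable_mult) auto
      have "T \<le> (\<Sum>k. 2 * (wt s k * (z k)^2) + 2 * v^2 * ccoef \<alpha> \<beta> k)"
        unfolding T_def by (rule suminf_le[OF pt2[OF s0 assms(4), of _ z \<alpha> v] sumL[OF sb, of v] s1])
      also have "\<dots> = 2 * B + 2 * v^2 * D"
        unfolding B_def D_def
        using suminf_add[OF summable_mult[OF sb, of 2] summable_mult[OF c_summ[OF ab], of "2 * v^2"]]
          suminf_mult[OF sb, of 2] suminf_mult[OF c_summ[OF ab], of "2 * v^2"] by simp
      finally show ?thesis .
    qed
    have M: "(- (\<gamma> / m) * v - (1 / m) * S)^2 \<le> 2 * (\<gamma>/m)^2 * N^2 + 2 * K^2 / m^2 * N^2"
    proof -
      have "(- (\<gamma> / m) * v - (1 / m) * S)^2 \<le> 2 * (- (\<gamma> / m) * v)^2 + 2 * (- (1/m) * S)^2"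
        using sq2[of "- (\<gamma> / m) * v" "- (1/m) * S"] by simp
      also have "\<dots> = 2 * (\<gamma>/m)^2 * v^2 + 2 * S^2 / m^2"
        by (simp add: power_mult_distrib power_divide)
      also have "\<dots> \<le> 2 * (\<gamma>/m)^2 * N^2 + 2 * (K^2 * N^2) / m^2"
        using vN S2 assms(1) by (intro add_mono mult_left_mono divide_right_mono) auto
      finally show ?thesis by simp
    qed
    have LX: "Lop m \<gamma> \<alpha> \<beta> X = (v, - (\<gamma> / m) * v - (1 / m) * S,
        \<lambda>k. - lam \<beta> k * z k + sqrt (ccoef \<alpha> \<beta> k) * v)"
      unfolding Xe Lop_def S_def by simp
    have "Hnorm s (Lop m \<gamma> \<alpha> \<beta> X) = sqrt (v^2 + (- (\<gamma> / m) * v - (1 / m) * S)^2 + T)"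
      unfolding LX Hnorm_def T_def by simp
    also have "\<dots> \<le> sqrt (C2 * N^2)"
    proof (rule real_sqrt_le_mono)
      have "2 * v^2 * D \<le> 2 * N^2 * D" using vN D0 by (intro mult_right_mono) auto
      thus "v^2 + (- (\<gamma> / m) * v - (1 / m) * S)^2 + T \<le> C2 * N^2"
        using vN M T BN unfolding C2_def by (simp add: algebra_simps)
    qed
    also have "\<dots> = sqrt C2 * N" using N0 by (simp add: real_sqrt_mult)
    finally show "Hnorm s (Lop m \<gamma> \<alpha> \<beta> X) \<le> sqrt C2 * Hnorm s X" using HX by simp
  qed
  have "\<exists>C \<ge> 0. \<forall>X \<in> Hs s. Hnorm s (Lop m \<gamma> \<alpha> \<beta> X) \<le> C * Hnorm s X"
    using P4 real_sqrt_ge_zero[OF C20] by (intro exI[of _ "sqrt C2"] conjI)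
  with P1 P2 P3 show ?thesis by (intro conjI)
qed

end
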